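(* In the synchronous $Q$-learning setting of the context, assume $|\mathcal S||\mathcal A|\ge2$ and let $Q^*$ be the unique fixed point of $\mathcal T$. (a) If $\epsilon_k\equiv\epsilon\le\frac{(1-\beta)^2}{640e\log(|\mathcal S||\mathcal A|)}$, then for all $k\ge0$, $\mathbb{E}[\|Q_k-Q^*\|_\infty^2]\le\frac32\|Q_0-Q^*\|_\infty^2\left[1-\frac{(1-\beta)\epsilon}{2}\right]^k+(1+2\|Q^*\|_\infty^2)\frac{256e\log(|\mathcal S||\mathcal A|)\epsilon}{(1-\beta)^2}$. (b) If $\epsilon_k=\epsilon/(k+K)$ with $\epsilon=\frac{4}{1-\beta}$ and $K=\frac{640e\log(|\mathcal S||\mathcal A|)}{(1-\beta)^3}$, then for all $k\ge0$, $\mathbb{E}[\|Q_k-Q^*\|_\infty^2]\le8192e^2(1+2\|Q^*\|_\infty^2+\|Q_0-Q^*\|_\infty^2)\frac{\log(|\mathcal S||\mathcal A|)}{(1-\beta)^3}\frac{1}{k+K}$.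
   Context: Finite MDP: finite state space $\mathcal S$, finite action space $\mathcal A$, transition matrices $P_a(s,s')$, reward $\mathcal R:\mathcal S\times\mathcal A\to[0,1]$, discount $\beta\in(0,1)$. The Bellman optimality operator on $Q\in\mathbb{R}^{|\mathcal S||\mathcal A|}$ is $[\mathcal T(Q)](s,a)=\mathcal R(s,a)+\beta\sum_{s'}P_a(s,s')\max_{a'}Q(s',a')$. Synchronous $Q$-learning: from deterministic $Q_0$, at each iteration $k$ and each $(s,a)$, a successor state $s'_{s,a}\sim P_a(s,\cdot)$ is sampled (independently of the past given the current iterate) and $Q_{k+1}(s,a)=Q_k(s,a)+\epsilon_k(\mathcal R(s,a)+\beta\max_{a'}Q_k(s'_{s,a},a')-Q_k(s,a))$. Logarithms are natural. *)

theory Defs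
  imports "HOL-Probability.Probability"
begin

text \<open>Q-functions are maps from state-action pairs to reals.
  Transition kernel: P a s is the distribution of the successor state P_a(s, .).\<close>

definition supnorm :: "('x::finite \<Rightarrow> real) \<Rightarrow> real" where
  "supnorm Q = Max (range (\<lambda>x. \<bar>Q x\<bar>))"

definition bellman ::
  "('s::finite \<Rightarrow> 'a::finite \<Rightarrow> real) \<Rightarrow> ('a \<Rightarrow> 's \<Rightarrow> 's pmf) \<Rightarrow> real
   \<Rightarrow> ('s \<times> 'a \<Rightarrow> real) \<Rightarrow> ('s \<times> 'a \<Rightarrow> real)" where
  "bellman R P \<beta> Q = (\<lambda>(s, a). R s a +
      \<beta> * (\<Sum>s'\<in>UNIV. pmf (P a s) s' * (MAX a'. Q (s', a'))))"

definition qstep ::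
  "('s::finite \<Rightarrow> 'a::finite \<Rightarrow> real) \<Rightarrow> real \<Rightarrow> real
   \<Rightarrow> ('s \<times> 'a \<Rightarrow> real) \<Rightarrow> ('s \<times> 'a \<Rightarrow> 's) \<Rightarrow> ('s \<times> 'a \<Rightarrow> real)" where
  "qstep R \<beta> e Q Y = (\<lambda>(s, a). Q (s, a) +
      e * (R s a + \<beta> * (MAX a'. Q (Y (s, a), a')) - Q (s, a)))"

text \<open>Law of the iterate Q_k: at each iteration, for each pair (s,a) a successor is sampled
  from P a s, independently across pairs and independently of the past given Q_k.\<close>
primrec qlearn ::
  "('s::finite \<Rightarrow> 'a::finite \<Rightarrow> real) \<Rightarrow> ('a \<Rightarrow> 's \<Rightarrow> 's pmf) \<Rightarrow> real
   \<Rightarrow> (nat \<Rightarrow> real) \<Rightarrow> ('s \<times> 'a \<Rightarrow> real) \<Rightarrow> nat \<Rightarrow> ('s \<times> 'a \<Rightarrow> real) pmf" where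
  "qlearn R P \<beta> eps Q0 0 = return_pmf Q0"
| "qlearn R P \<beta> eps Q0 (Suc k) =
     bind_pmf (qlearn R P \<beta> eps Q0 k)
       (\<lambda>Q. map_pmf (qstep R \<beta> (eps k) Q)
              (Pi_pmf UNIV undefined (\<lambda>(s, a). P a s)))"

end

theory Submission
  imports Defs
begin


lemma supnorm_ge: "\<bar>Q x\<bar> \<le> supnorm (Q::'x::finite \<Rightarrow> real)"
  unfolding supnorm_def by (rule Max_ge) auto

lemma supnorm_le: "(\<And>x. \<bar>Q x\<bar> \<le> c) \<Longrightarrow> supnorm (Q::'x::finite \<Rightarrow> real) \<le> c"
  unfolding supnorm_def by (rule Max.boundedI) auto

lemma supnorm_nonneg: "0 \<le> supnorm (Q::'x::finite \<Rightarrow> real)"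
  using supnorm_ge[of Q undefined] by linarith

lemma supnorm_ex: "\<exists>x. supnorm (Q::'x::finite \<Rightarrow> real) = \<bar>Q x\<bar>"
proof -
  have "supnorm Q \<in> range (\<lambda>x. \<bar>Q x\<bar>)" unfolding supnorm_def by (rule Max_in) auto
  thus ?thesis by auto
qed

lemma max_diff_le:
  fixes f g :: "'a::finite \<Rightarrow> real"
  assumes "\<And>a. \<bar>f a - g a\<bar> \<le> c"
  shows "\<bar>(MAX a. f a) - (MAX a. g a)\<bar> \<le> c"
proof -
  have 1: "(MAX a. f a) \<le> (MAX a. g a) + c"
  proof (rule Max.boundedI)
    fix y assume "y \<in> range f" then obtain a where "y = f a" by auto
    moreover have "g a \<le> (MAX a. g a)" by (rule Max_ge) auto
    ultimately show "y \<le> (MAX a. g a) + c" using assms[of a] by linarith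
  qed auto
  have 2: "(MAX a. g a) \<le> (MAX a. f a) + c"
  proof (rule Max.boundedI)
    fix y assume "y \<in> range g" then obtain a where "y = g a" by auto
    moreover have "f a \<le> (MAX a. f a)" by (rule Max_ge) auto
    ultimately show "y \<le> (MAX a. f a) + c" using assms[of a] by linarith
  qed auto
  from 1 2 show ?thesis by linarith
qed

lemma max_abs_le:
  fixes f :: "'a::finite \<Rightarrow> real"
  assumes "\<And>a. \<bar>f a\<bar> \<le> c"
  shows "\<bar>(MAX a. f a)\<bar> \<le> c"
  using max_diff_le[of f "\<lambda>_. 0" c] assms by simp

lemma E_bind:
  fixes h :: "'b \<Rightarrow> real"
  assumes "finite (set_pmf p)" "\<And>x. finite (set_pmf (f x))"
  shows "measure_pmf.expectation (p \<bind> f) h =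
         measure_pmf.expectation p (\<lambda>x. measure_pmf.expectation (f x) h)"
  using assms
  by (subst pmf_expectation_bind[of "set_pmf p"]) (auto simp: integral_measure_pmf_real[of "set_pmf p"] mult.commute)

lemma E_mono:
  fixes f g :: "'b \<Rightarrow> real"
  assumes "finite (set_pmf p)" "\<And>x. x \<in> set_pmf p \<Longrightarrow> f x \<le> g x"
  shows "measure_pmf.expectation p f \<le> measure_pmf.expectation p g"
  using assms by (intro integral_mono_AE) (auto simp: integrable_measure_pmf_finite AE_measure_pmf_iff)

lemma hoeffding_pos:
  fixes q :: "'b::finite pmf" and f :: "'b \<Rightarrow> real"
  assumes "\<And>x. a \<le> f x \<and> f x \<le> b" "measure_pmf.expectation q f = 0" "l > 0"
  shows "measure_pmf.expectation q (\<lambda>x. exp (l * f x)) \<le> exp (l^2 * (b-a)^2 / 8)"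
proof -
  interpret interval_bounded_random_variable "measure_pmf q" f a b
    by unfold_locales (use assms in auto)
  have "nn_integral q (\<lambda>x. ennreal (exp (l * f x))) \<le> ennreal (exp (l\<^sup>2 * (b - a)\<^sup>2 / 8))"
    using Hoeffdings_lemma_nn_integral[OF assms(3)] assms(2) by simp
  moreover have "nn_integral q (\<lambda>x. ennreal (exp (l * f x))) = ennreal (measure_pmf.expectation q (\<lambda>x. exp (l * f x)))"
    by (intro nn_integral_eq_integral) (auto simp: integrable_measure_pmf_finite)
  ultimately show ?thesis by (simp add: ennreal_le_iff)
qed

lemma hoeffding_pmf:
  fixes q :: "'b::finite pmf" and f :: "'b \<Rightarrow> real"
  assumes "\<And>x. a \<le> f x \<and> f x \<le> b" "measure_pmf.expectation q f = 0"
  shows "measure_pmf.expectation q (\<lambda>x. exp (l * f x)) \<le> exp (l^2 * (b-a)^2 / 8)"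
proof -
  consider "l > 0" | "l = 0" | "l < 0" by linarith
  then show ?thesis
  proof cases
    case 1 then show ?thesis using hoeffding_pos[OF assms] by blast
  next
    case 2 then show ?thesis by simp
  next
    case 3
    have e: "measure_pmf.expectation q (\<lambda>x. - f x) = 0" using assms(2) by simp
    have "measure_pmf.expectation q (\<lambda>x. exp ((-l) * (- f x))) \<le> exp ((-l)^2 * ((-a)-(-b))^2 / 8)"
      by (rule hoeffding_pos[OF _ e]) (use assms(1) 3 in auto)
    moreover have "((-a)-(-b))^2 = (b-a)^2" by (simp add: power2_eq_square algebra_simps)
    ultimately show ?thesis by simp
  qed
qed



definition PP :: "('a::finite \<Rightarrow> 's::finite \<Rightarrow> 's pmf) \<Rightarrow> ('s \<times> 'a \<Rightarrow> 's) pmf" where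
  "PP P = Pi_pmf UNIV undefined (\<lambda>(s, a). P a s)"

definition wv :: "('s::finite \<Rightarrow> 'a::finite \<Rightarrow> real) \<Rightarrow> real \<Rightarrow> ('s \<times> 'a \<Rightarrow> real) \<Rightarrow> ('s \<times> 'a \<Rightarrow> 's) \<Rightarrow> ('s \<times> 'a \<Rightarrow> real)" where
  "wv R \<beta> Qs Y = (\<lambda>(s, a). R s a + \<beta> * (MAX a'. Qs (Y (s, a), a')) - Qs (s, a))"

definition zstep :: "('s::finite \<Rightarrow> 'a::finite \<Rightarrow> real) \<Rightarrow> real \<Rightarrow> ('s \<times> 'a \<Rightarrow> real) \<Rightarrow> real
   \<Rightarrow> ('s \<times> 'a \<Rightarrow> real) \<times> ('s \<times> 'a \<Rightarrow> real) \<times> real \<Rightarrow> ('s \<times> 'a \<Rightarrow> 's)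
   \<Rightarrow> ('s \<times> 'a \<Rightarrow> real) \<times> ('s \<times> 'a \<Rightarrow> real) \<times> real" where
  "zstep R \<beta> Qs e z Y = (case z of (Q, N, C) \<Rightarrow>
     (qstep R \<beta> e Q Y, \<lambda>x. (1 - e) * N x + e * wv R \<beta> Qs Y x,
      (1 - e * (1 - \<beta>)) * C + e * \<beta> * supnorm N))"

primrec Z :: "('s::finite \<Rightarrow> 'a::finite \<Rightarrow> real) \<Rightarrow> ('a \<Rightarrow> 's \<Rightarrow> 's pmf) \<Rightarrow> real
   \<Rightarrow> ('s \<times> 'a \<Rightarrow> real) \<Rightarrow> (nat \<Rightarrow> real) \<Rightarrow> ('s \<times> 'a \<Rightarrow> real) \<Rightarrow> nat
   \<Rightarrow> (('s \<times> 'a \<Rightarrow> real) \<times> ('s \<times> 'a \<Rightarrow> real) \<times> real) pmf" where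
  "Z R P \<beta> Qs eps Q0 0 = return_pmf (Q0, \<lambda>_. 0, 0)"
| "Z R P \<beta> Qs eps Q0 (Suc k) = bind_pmf (Z R P \<beta> Qs eps Q0 k) (\<lambda>z. map_pmf (zstep R \<beta> Qs (eps k) z) (PP P))"

lemma finite_PP: "finite (set_pmf (PP P))"
  by (rule finite_subset[of _ UNIV]) auto

lemma finite_Z: "finite (set_pmf (Z R P \<beta> Qs eps Q0 k))"
  by (induction k) (auto simp: finite_PP)

lemma fst_Z: "map_pmf fst (Z R P \<beta> Qs eps Q0 k) = qlearn R P \<beta> eps Q0 k"
proof (induction k)
  case 0 then show ?case by simp
next
  case (Suc k)
  have "map_pmf fst (Z R P \<beta> Qs eps Q0 (Suc k)) =
        bind_pmf (Z R P \<beta> Qs eps Q0 k) (\<lambda>z. map_pmf (qstep R \<beta> (eps k) (fst z)) (PP P))"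
    by (simp add: map_bind_pmf pmf.map_comp o_def zstep_def case_prod_unfold)
  also have "\<dots> = bind_pmf (map_pmf fst (Z R P \<beta> Qs eps Q0 k)) (\<lambda>Q. map_pmf (qstep R \<beta> (eps k) Q) (PP P))"
    by (simp add: bind_map_pmf)
  also have "\<dots> = qlearn R P \<beta> eps Q0 (Suc k)" using Suc by (simp add: PP_def)
  finally show ?case .
qed

lemma E_qlearn:
  fixes f :: "_ \<Rightarrow> real"
  shows "measure_pmf.expectation (qlearn R P \<beta> eps Q0 k) f =
   measure_pmf.expectation (Z R P \<beta> Qs eps Q0 k) (\<lambda>z. f (fst z))"
  by (subst fst_Z[of R P \<beta> Qs eps Q0 k, symmetric]) (rule integral_map_pmf)

lemma E_Z_Suc:
  fixes h :: "_ \<Rightarrow> real"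
  shows "measure_pmf.expectation (Z R P \<beta> Qs eps Q0 (Suc k)) h =
   measure_pmf.expectation (Z R P \<beta> Qs eps Q0 k)
     (\<lambda>z. measure_pmf.expectation (PP P) (\<lambda>Y. h (zstep R \<beta> Qs (eps k) z Y)))"
  by (simp add: E_bind finite_Z finite_PP)

lemma E_PP_comp:
  fixes g :: "'s::finite \<Rightarrow> real"
  shows "measure_pmf.expectation (PP P) (\<lambda>Y. g (Y (s, a))) = measure_pmf.expectation (P a s) g"
proof -
  have "map_pmf (\<lambda>Y. Y (s, a)) (PP P) = P a s"
    unfolding PP_def by (subst Pi_pmf_component) auto
  hence "measure_pmf.expectation (P a s) g = measure_pmf.expectation (map_pmf (\<lambda>Y. Y (s, a)) (PP P)) g"
    by simp
  thus ?thesis by simp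
qed



lemma pointwise_sq:
  fixes V s c X :: real
  assumes "V > 0" "s > 0" "c \<ge> 0" "V * s = c" "V * s^2 \<ge> 1" "X \<ge> 0"
  shows "X^2 \<le> c^2 + 2 * V * exp (s * X - s * c)"
proof (cases "X \<le> c")
  case True
  then have "X^2 \<le> c^2" using assms by (intro power_mono) auto
  moreover have "0 \<le> 2 * V * exp (s * X - s * c)" using assms by simp
  ultimately show ?thesis by linarith
next
  case False
  define y where "y = X - c"
  have y: "y > 0" using False y_def by simp
  have "1 + s*y + (s*y)^2/2 \<le> exp (s*y)" using y assms by (intro exp_lower_Taylor_quadratic) simp
  hence "2*V*(1 + s*y + (s*y)^2/2) \<le> 2*V*exp (s*y)" using assms by simp
  moreover have "2*V*(1 + s*y + (s*y)^2/2) = 2*V + 2 * (V * s) * y + (V * s^2) * y^2"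
    by (simp add: algebra_simps power2_eq_square)
  moreover have "(V * s^2) * y^2 \<ge> y^2" using assms(5) mult_right_mono[of 1 "V * s^2" "y^2"] by simp
  moreover have "X^2 = c^2 + 2*c*y + y^2" by (simp add: y_def power2_eq_square algebra_simps)
  moreover have "s * X - s * c = s * y" by (simp add: y_def algebra_simps)
  ultimately show ?thesis using assms by (smt (verit) mult_pos_pos)
qed

lemma exp_supnorm_le:
  fixes N :: "'i::finite \<Rightarrow> real"
  assumes "s \<ge> 0"
  shows "exp (s * supnorm N) \<le> (\<Sum>i\<in>UNIV. exp (s * N i) + exp (- s * N i))"
proof -
  obtain j where j: "supnorm N = \<bar>N j\<bar>" using supnorm_ex by blast
  have "exp (s * \<bar>N j\<bar>) \<le> exp (s * N j) + exp (- s * N j)"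
    by (cases "N j \<ge> 0") (auto simp: add_increasing add_increasing2)
  also have "\<dots> \<le> (\<Sum>i\<in>UNIV. exp (s * N i) + exp (- s * N i))"
    by (rule member_le_sum[of j UNIV "\<lambda>i. exp (s * N i) + exp (- s * N i)"]) (auto intro: add_nonneg_nonneg)
  finally show ?thesis using j by simp
qed

lemma ln_two_half: "ln (2::real) \<ge> 1/2"
proof -
  have "exp (1/2::real) ^ 2 = exp 1" by (simp flip: exp_of_nat_mult)
  also have "\<dots> \<le> 2^2" using exp_le by simp
  finally have "exp (1/2::real) \<le> 2" by (rule power2_le_imp_le) simp
  hence "ln (exp (1/2::real)) \<le> ln 2" by (subst ln_le_cancel_iff) auto
  thus ?thesis by simp
qed

lemma max_moment:
  fixes p :: "'z pmf" and N :: "'z \<Rightarrow> 'i::finite \<Rightarrow> real"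
  assumes fin: "finite (set_pmf p)" and V: "V > 0" and d: "CARD('i) \<ge> 2"
    and mgf: "\<And>i t. measure_pmf.expectation p (\<lambda>z. exp (t * N z i)) \<le> exp (t^2 * V / 2)"
  shows "measure_pmf.expectation p (\<lambda>z. (supnorm (N z))^2) \<le> 2 * V * (ln (2 * real CARD('i)) + 1)"
proof -
  define d where "d = real CARD('i)"
  define L where "L = ln (2 * d)"
  have d2: "d \<ge> 2" using d by (simp add: d_def)
  have "L \<ge> ln 4" unfolding L_def using d2 by simp
  moreover have "ln (4::real) = 2 * ln 2" using ln_realpow[of 2 2] by simp
  ultimately have L1: "L \<ge> 1" using ln_two_half by linarith
  define s where "s = sqrt (2 * L / V)"
  define c where "c = sqrt (2 * V * L)"
  have s: "s > 0" using L1 V by (simp add: s_def)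
  have s2: "s^2 = 2 * L / V" using L1 V by (simp add: s_def)
  have c: "c \<ge> 0" "c^2 = 2 * V * L" using L1 V by (auto simp: c_def)
  have Vs: "V * s = c"
  proof -
    have "(V * s)^2 = V * (V * s^2)" by (simp add: power2_eq_square)
    also have "\<dots> = c^2" using s2 c V by simp
    finally have "(V * s)^2 = c^2" .
    moreover have "V * s \<ge> 0" using V s by simp
    ultimately show ?thesis using power2_eq_iff_nonneg[of "V * s" c] c by simp
  qed
  have Vs2: "V * s^2 \<ge> 1" using s2 V L1 by simp
  have sc: "s * c = 2 * L"
  proof -
    have "s * c = V * s^2" using Vs by (simp add: power2_eq_square algebra_simps flip: Vs)
    thus ?thesis using s2 V by simp
  qed
  let ?F = "\<lambda>z. c^2 + 2 * V * exp (- s * c) * (\<Sum>i\<in>UNIV. exp (s * N z i) + exp (- s * N z i))"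
  have int: "\<And>f :: 'z \<Rightarrow> real. integrable p f" using fin by (simp add: integrable_measure_pmf_finite)
  have "measure_pmf.expectation p (\<lambda>z. (supnorm (N z))^2) \<le> measure_pmf.expectation p ?F"
  proof (rule E_mono[OF fin])
    fix z
    have "(supnorm (N z))^2 \<le> c^2 + 2 * V * exp (s * supnorm (N z) - s * c)"
      by (rule pointwise_sq) (use V s c Vs Vs2 supnorm_nonneg in auto)
    also have "exp (s * supnorm (N z) - s * c) = exp (- s * c) * exp (s * supnorm (N z))"
      by (simp add: exp_diff exp_minus field_simps)
    also have "\<dots> \<le> exp (- s * c) * (\<Sum>i\<in>UNIV. exp (s * N z i) + exp (- s * N z i))"
      using exp_supnorm_le[of s "N z"] s by simp
    finally show "(supnorm (N z))^2 \<le> ?F z" using V by (simp add: mult.assoc)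
  qed
  also have "measure_pmf.expectation p ?F = c^2 + 2 * V * exp (- s * c) *
      (\<Sum>i\<in>UNIV. measure_pmf.expectation p (\<lambda>z. exp (s * N z i)) + measure_pmf.expectation p (\<lambda>z. exp ((- s) * N z i)))"
    by (simp add: int Bochner_Integration.integral_sum prob_space.prob_space[OF prob_space_measure_pmf])
  also have "\<dots> \<le> c^2 + 2 * V * exp (- s * c) * (\<Sum>i\<in>(UNIV::'i set). exp (s^2 * V / 2) + exp (s^2 * V / 2))"
    using V mgf[where t="- s"] by (intro add_left_mono mult_left_mono sum_mono add_mono mgf) (auto simp: power2_eq_square)
  also have "\<dots> = c^2 + 2 * V * (exp (- s * c) * (2 * d) * exp (s^2 * V / 2))"
    by (simp add: d_def)
  also have "exp (- s * c) * (2 * d) * exp (s^2 * V / 2) = 1"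
  proof -
    have "s^2 * V / 2 = L" using s2 V by simp
    moreover have "2 * d = exp L" using d2 by (simp add: L_def)
    ultimately show ?thesis using sc by (simp flip: exp_add)
  qed
  finally show ?thesis using c by (simp add: L_def d_def algebra_simps)
qed



lemma sq_convex:
  fixes a b t :: real
  assumes "0 \<le> t" "t \<le> 1"
  shows "(t * a + (1 - t) * b)^2 \<le> t * a^2 + (1 - t) * b^2"
proof -
  have "t * a^2 + (1 - t) * b^2 - (t * a + (1 - t) * b)^2 = t * (1 - t) * (a - b)^2"
    by (simp add: power2_eq_square algebra_simps)
  moreover have "t * (1 - t) * (a - b)^2 \<ge> 0" using assms by simp
  ultimately show ?thesis by linarith
qed

lemma sn_diff_le:
  fixes Q Qs N :: "'x::finite \<Rightarrow> real"
  shows "supnorm (\<lambda>x. Q x - Qs x) \<le> supnorm (\<lambda>x. Q x - Qs x - N x) + supnorm N"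
proof (rule supnorm_le)
  fix x
  have "\<bar>Q x - Qs x - N x\<bar> \<le> supnorm (\<lambda>x. Q x - Qs x - N x)" by (rule supnorm_ge)
  moreover have "\<bar>N x\<bar> \<le> supnorm N" by (rule supnorm_ge)
  ultimately show "\<bar>Q x - Qs x\<bar> \<le> supnorm (\<lambda>x. Q x - Qs x - N x) + supnorm N" by linarith
qed

context
  fixes R :: "'s::finite \<Rightarrow> 'a::finite \<Rightarrow> real" and P :: "'a \<Rightarrow> 's \<Rightarrow> 's pmf"
    and \<beta> :: real and Qs :: "'s \<times> 'a \<Rightarrow> real"
  assumes beta: "0 < \<beta>" "\<beta> < 1"
    and fixpoint: "bellman R P \<beta> Qs = Qs"
begin

lemma wv_mean: "measure_pmf.expectation (PP P) (\<lambda>Y. wv R \<beta> Qs Y (s, a)) = 0"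
proof -
  define M where "M = (\<lambda>y. MAX a'. Qs (y, a'))"
  define g where "g = (\<lambda>y. R s a + \<beta> * M y - Qs (s, a))"
  have "measure_pmf.expectation (PP P) (\<lambda>Y. wv R \<beta> Qs Y (s, a)) = measure_pmf.expectation (PP P) (\<lambda>Y. g (Y (s, a)))"
    by (simp add: wv_def g_def M_def)
  also have "\<dots> = measure_pmf.expectation (P a s) g" by (rule E_PP_comp)
  also have "\<dots> = (\<Sum>y\<in>UNIV. g y * pmf (P a s) y)"
    by (subst integral_measure_pmf_real[of UNIV]) auto
  also have "\<dots> = (R s a - Qs (s, a)) * (\<Sum>y\<in>UNIV. pmf (P a s) y) + \<beta> * (\<Sum>y\<in>UNIV. pmf (P a s) y * M y)"
    by (simp add: g_def algebra_simps sum.distrib sum_distrib_left sum_distrib_right sum_subtractf)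
  also have "(\<Sum>y\<in>UNIV. pmf (P a s) y) = 1" by (rule sum_pmf_eq_1) auto
  also have "R s a + \<beta> * (\<Sum>y\<in>UNIV. pmf (P a s) y * M y) = Qs (s, a)"
    using fun_cong[OF fixpoint, of "(s, a)"] by (simp add: bellman_def M_def)
  hence "(R s a - Qs (s, a)) * 1 + \<beta> * (\<Sum>y\<in>UNIV. pmf (P a s) y * M y) = 0" by simp
  finally show ?thesis .
qed

lemma wv_mgf:
  "measure_pmf.expectation (PP P) (\<lambda>Y. exp (t * wv R \<beta> Qs Y (s, a))) \<le> exp (t^2 * (supnorm Qs)^2 / 2)"
proof -
  define M where "M = (\<lambda>y. MAX a'. Qs (y, a'))"
  define g where "g = (\<lambda>y. R s a + \<beta> * M y - Qs (s, a))"
  define x where "x = supnorm Qs"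
  have Mb: "\<bar>M y\<bar> \<le> x" for y unfolding M_def x_def
    by (rule max_abs_le) (rule supnorm_ge)
  have x0: "x \<ge> 0" unfolding x_def by (rule supnorm_nonneg)
  have "measure_pmf.expectation (PP P) (\<lambda>Y. exp (t * wv R \<beta> Qs Y (s, a))) =
        measure_pmf.expectation (PP P) (\<lambda>Y. (\<lambda>y. exp (t * g y)) (Y (s, a)))"
    by (simp add: wv_def g_def M_def)
  also have "\<dots> = measure_pmf.expectation (P a s) (\<lambda>y. exp (t * g y))" by (rule E_PP_comp)
  also have "\<dots> \<le> exp (t^2 * ((R s a + \<beta> * x - Qs (s, a)) - (R s a - \<beta> * x - Qs (s, a)))^2 / 8)"
  proof (rule hoeffding_pmf)
    fix y
    have "\<bar>\<beta> * M y\<bar> \<le> \<beta> * x" using Mb[of y] beta by (simp add: abs_mult)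
    thus "R s a - \<beta> * x - Qs (s, a) \<le> g y \<and> g y \<le> R s a + \<beta> * x - Qs (s, a)"
      unfolding g_def by linarith
  next
    have "measure_pmf.expectation (PP P) (\<lambda>Y. g (Y (s, a))) = 0"
      using wv_mean[of s a] by (simp add: wv_def g_def M_def)
    thus "measure_pmf.expectation (P a s) g = 0" by (simp add: E_PP_comp)
  qed
  also have "((R s a + \<beta> * x - Qs (s, a)) - (R s a - \<beta> * x - Qs (s, a)))^2 = 4 * (\<beta> * x)^2"
    by (simp add: power2_eq_square algebra_simps)
  also have "exp (t^2 * (4 * (\<beta> * x)^2) / 8) \<le> exp (t^2 * x^2 / 2)"
  proof -
    have "(\<beta> * x)^2 \<le> x^2" using beta x0 by (intro power_mono) (auto simp: mult_left_le_one_le)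
    hence "t^2 * (\<beta> * x)^2 \<le> t^2 * x^2" by (intro mult_left_mono) auto
    thus ?thesis by simp
  qed
  finally show ?thesis by (simp add: x_def)
qed

end


context
  fixes R :: "'s::finite \<Rightarrow> 'a::finite \<Rightarrow> real" and P :: "'a \<Rightarrow> 's \<Rightarrow> 's pmf"
    and \<beta> :: real and Qs :: "'s \<times> 'a \<Rightarrow> real"
  assumes beta: "0 < \<beta>" "\<beta> < 1"
    and fixpoint: "bellman R P \<beta> Qs = Qs"
begin

lemma step_D:
  fixes Q N :: "'s \<times> 'a \<Rightarrow> real" and C e :: real and Y :: "'s \<times> 'a \<Rightarrow> 's"
  assumes e: "0 \<le> e" "e \<le> 1"
  defines "z' \<equiv> zstep R \<beta> Qs e (Q, N, C) Y"
  shows "supnorm (\<lambda>x. fst z' x - Qs x - fst (snd z') x) \<le>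
         (1 - e * (1 - \<beta>)) * supnorm (\<lambda>x. Q x - Qs x - N x) + e * \<beta> * supnorm N"
proof (rule supnorm_le)
  fix x :: "'s \<times> 'a"
  obtain s a where x: "x = (s, a)" by (cases x)
  define y where "y = Y (s, a)"
  have eq: "fst z' x - Qs x - fst (snd z') x = (1 - e) * (Q x - Qs x - N x)
      + e * \<beta> * ((MAX a'. Q (y, a')) - (MAX a'. Qs (y, a')))"
    by (simp add: z'_def zstep_def qstep_def wv_def x y_def algebra_simps)
  have m: "\<bar>(MAX a'. Q (y, a')) - (MAX a'. Qs (y, a'))\<bar> \<le> supnorm (\<lambda>x. Q x - Qs x)"
    by (rule max_diff_le) (rule supnorm_ge[of "\<lambda>x. Q x - Qs x", simplified])
  have d: "\<bar>Q x - Qs x - N x\<bar> \<le> supnorm (\<lambda>x. Q x - Qs x - N x)"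
    by (rule supnorm_ge[of "\<lambda>x. Q x - Qs x - N x", simplified])
  have "\<bar>fst z' x - Qs x - fst (snd z') x\<bar> \<le> (1 - e) * \<bar>Q x - Qs x - N x\<bar>
      + e * \<beta> * \<bar>(MAX a'. Q (y, a')) - (MAX a'. Qs (y, a'))\<bar>"
    unfolding eq using e beta by (simp add: abs_mult abs_triangle_ineq[THEN order_trans])
  also have "\<dots> \<le> (1 - e) * supnorm (\<lambda>x. Q x - Qs x - N x)
      + e * \<beta> * (supnorm (\<lambda>x. Q x - Qs x - N x) + supnorm N)"
    using e beta m d sn_diff_le[of Q Qs N]
    by (intro add_mono mult_left_mono) auto
  also have "\<dots> = (1 - e * (1 - \<beta>)) * supnorm (\<lambda>x. Q x - Qs x - N x) + e * \<beta> * supnorm N"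
    by (simp add: algebra_simps)
  finally show "\<bar>fst z' x - Qs x - fst (snd z') x\<bar> \<le> \<dots>" .
qed

lemma Z_inv:
  assumes eps: "\<And>k. 0 \<le> eps k \<and> eps k \<le> 1"
  shows "z \<in> set_pmf (Z R P \<beta> Qs eps Q0 k) \<Longrightarrow>
    supnorm (\<lambda>x. fst z x - Qs x - fst (snd z) x) \<le>
      (\<Prod>j<k. 1 - eps j * (1 - \<beta>)) * supnorm (\<lambda>x. Q0 x - Qs x) + snd (snd z) \<and> 0 \<le> snd (snd z)"
proof (induction k arbitrary: z)
  case 0 then show ?case by simp
next
  case (Suc k)
  then obtain z0 Y where z0: "z0 \<in> set_pmf (Z R P \<beta> Qs eps Q0 k)" and z: "z = zstep R \<beta> Qs (eps k) z0 Y"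
    by auto
  obtain Q N C where z0e: "z0 = (Q, N, C)" by (cases z0)
  define \<rho> where "\<rho> = 1 - eps k * (1 - \<beta>)"
  define A where "A = (\<Prod>j<k. 1 - eps j * (1 - \<beta>)) * supnorm (\<lambda>x. Q0 x - Qs x)"
  have IH: "supnorm (\<lambda>x. Q x - Qs x - N x) \<le> A + C" "0 \<le> C"
    using Suc.IH[OF z0] by (auto simp: z0e A_def)
  have rho: "0 \<le> \<rho>" "\<rho> \<le> 1" using eps[of k] beta unfolding \<rho>_def
    by (auto simp: mult_le_one)
  have "supnorm (\<lambda>x. fst z x - Qs x - fst (snd z) x) \<le> \<rho> * supnorm (\<lambda>x. Q x - Qs x - N x) + eps k * \<beta> * supnorm N"
    unfolding z z0e \<rho>_def by (rule step_D) (use eps in auto)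
  also have "\<dots> \<le> \<rho> * (A + C) + eps k * \<beta> * supnorm N"
    using IH rho eps[of k] beta by (intro add_mono mult_left_mono) auto
  finally have 1: "supnorm (\<lambda>x. fst z x - Qs x - fst (snd z) x) \<le> \<rho> * A + (\<rho> * C + eps k * \<beta> * supnorm N)"
    by (simp add: algebra_simps)
  have 2: "snd (snd z) = \<rho> * C + eps k * \<beta> * supnorm N" by (simp add: z z0e zstep_def \<rho>_def)
  have 3: "0 \<le> \<rho> * C + eps k * \<beta> * supnorm N"
    using rho IH eps[of k] beta supnorm_nonneg[of N] by simp
  have 4: "\<rho> * A = (\<Prod>j<Suc k. 1 - eps j * (1 - \<beta>)) * supnorm (\<lambda>x. Q0 x - Qs x)"
    by (simp add: A_def \<rho>_def)
  show ?case using 1 2 3 4 by simp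
qed

end


context
  fixes R :: "'s::finite \<Rightarrow> 'a::finite \<Rightarrow> real" and P :: "'a \<Rightarrow> 's \<Rightarrow> 's pmf"
    and \<beta> :: real and Qs :: "'s \<times> 'a \<Rightarrow> real"
  assumes beta: "0 < \<beta>" "\<beta> < 1"
    and fixpoint: "bellman R P \<beta> Qs = Qs"
begin

lemma Z_mgf:
  assumes eps: "\<And>k. 0 \<le> eps k \<and> eps k \<le> 1"
    and V0: "V 0 \<ge> 0"
    and Vs: "\<And>k. (1 - eps k)^2 * V k + (eps k)^2 * (supnorm Qs)^2 \<le> V (Suc k)"
  shows "measure_pmf.expectation (Z R P \<beta> Qs eps Q0 k) (\<lambda>z. exp (t * fst (snd z) i)) \<le> exp (t^2 * V k / 2)"
proof (induction k arbitrary: t)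
  case 0 then show ?case using V0 by simp
next
  case (Suc k)
  obtain s a where i: "i = (s, a)" by (cases i)
  define \<alpha> where "\<alpha> = eps k"
  define x where "x = supnorm Qs"
  define c where "c = exp ((t * \<alpha>)^2 * x^2 / 2)"
  have "measure_pmf.expectation (Z R P \<beta> Qs eps Q0 (Suc k)) (\<lambda>z. exp (t * fst (snd z) i)) =
    measure_pmf.expectation (Z R P \<beta> Qs eps Q0 k) (\<lambda>z. measure_pmf.expectation (PP P)
      (\<lambda>Y. exp (t * ((1 - \<alpha>) * fst (snd z) i + \<alpha> * wv R \<beta> Qs Y i))))"
    by (subst E_Z_Suc) (simp add: zstep_def case_prod_unfold \<alpha>_def)
  also have "\<dots> = measure_pmf.expectation (Z R P \<beta> Qs eps Q0 k) (\<lambda>z. exp ((t * (1 - \<alpha>)) * fst (snd z) i) *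
       measure_pmf.expectation (PP P) (\<lambda>Y. exp ((t * \<alpha>) * wv R \<beta> Qs Y (s, a))))"
    by (simp add: distrib_left exp_add mult.assoc i)
  also have "\<dots> \<le> measure_pmf.expectation (Z R P \<beta> Qs eps Q0 k) (\<lambda>z. exp ((t * (1 - \<alpha>)) * fst (snd z) i) * c)"
    by (rule E_mono[OF finite_Z]) (simp add: c_def x_def wv_mgf[OF beta fixpoint])
  also have "\<dots> = measure_pmf.expectation (Z R P \<beta> Qs eps Q0 k) (\<lambda>z. exp ((t * (1 - \<alpha>)) * fst (snd z) i)) * c"
    by simp
  also have "\<dots> \<le> exp ((t * (1 - \<alpha>))^2 * V k / 2) * c"
    using Suc.IH[of "t * (1 - \<alpha>)"] by (simp add: c_def)
  also have "\<dots> = exp (t^2 * ((1 - \<alpha>)^2 * V k + \<alpha>^2 * x^2) / 2)"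
    by (simp add: c_def flip: exp_add) (simp add: power2_eq_square algebra_simps)
  also have "\<dots> \<le> exp (t^2 * V (Suc k) / 2)"
    using Vs[of k] by (simp add: \<alpha>_def x_def mult_left_mono)
  finally show ?case .
qed

lemma Z_N2:
  assumes eps: "\<And>k. 0 \<le> eps k \<and> eps k \<le> 1"
    and V0: "V 0 \<ge> 0" and Vpos: "V k > 0"
    and Vs: "\<And>k. (1 - eps k)^2 * V k + (eps k)^2 * (supnorm Qs)^2 \<le> V (Suc k)"
    and card: "CARD('s) * CARD('a) \<ge> 2"
  shows "measure_pmf.expectation (Z R P \<beta> Qs eps Q0 k) (\<lambda>z. (supnorm (fst (snd z)))^2)
     \<le> 2 * V k * (ln (2 * real (CARD('s) * CARD('a))) + 1)"
proof -
  have mgf: "\<And>i t. measure_pmf.expectation (Z R P \<beta> Qs eps Q0 k) (\<lambda>z. exp (t * fst (snd z) i)) \<le> exp (t^2 * V k / 2)"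
    by (rule Z_mgf[OF eps V0 Vs])
  have "measure_pmf.expectation (Z R P \<beta> Qs eps Q0 k) (\<lambda>z. (supnorm (fst (snd z)))^2)
     \<le> 2 * V k * (ln (2 * real CARD('s \<times> 'a)) + 1)"
    by (rule max_moment[OF finite_Z Vpos _ mgf]) (use card in simp)
  thus ?thesis by simp
qed

lemma Z_C2:
  assumes eps: "\<And>k. 0 < eps k \<and> eps k \<le> 1"
    and Hb: "\<And>k. measure_pmf.expectation (Z R P \<beta> Qs eps Q0 k) (\<lambda>z. (supnorm (fst (snd z)))^2) \<le> H k"
    and G0: "G 0 \<ge> 0"
    and Gs: "\<And>k. (1 - eps k * (1 - \<beta>)) * G k + eps k * \<beta>^2 / (1 - \<beta>) * H k \<le> G (Suc k)"
  shows "measure_pmf.expectation (Z R P \<beta> Qs eps Q0 k) (\<lambda>z. (snd (snd z))^2) \<le> G k"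
proof (induction k)
  case 0 then show ?case using G0 by simp
next
  case (Suc k)
  define \<alpha> where "\<alpha> = eps k"
  define \<rho> where "\<rho> = 1 - \<alpha> * (1 - \<beta>)"
  have a: "0 < \<alpha>" "\<alpha> \<le> 1" using eps[of k] by (auto simp: \<alpha>_def)
  have rho: "0 \<le> \<rho>" "\<rho> \<le> 1" using a beta unfolding \<rho>_def by (auto simp: mult_le_one)
  have pw: "(\<rho> * C + \<alpha> * \<beta> * n)^2 \<le> \<rho> * C^2 + \<alpha> * \<beta>^2 / (1 - \<beta>) * n^2" for C n
  proof -
    have "\<rho> * C + \<alpha> * \<beta> * n = \<rho> * C + (1 - \<rho>) * (\<beta> * n / (1 - \<beta>))"
      using beta by (simp add: \<rho>_def field_simps)
    also have "(\<dots>)^2 \<le> \<rho> * C^2 + (1 - \<rho>) * (\<beta> * n / (1 - \<beta>))^2"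
      by (rule sq_convex) (use rho in auto)
    also have "(1 - \<rho>) * (\<beta> * n / (1 - \<beta>))^2 = \<alpha> * ((1 - \<beta>) * ((\<beta>^2 * n^2) / (1 - \<beta>)^2))"
      by (simp add: \<rho>_def power_divide power_mult_distrib)
    also have "(1 - \<beta>) * ((\<beta>^2 * n^2) / (1 - \<beta>)^2) = (\<beta>^2 * n^2) / (1 - \<beta>)"
      using beta by (simp add: power2_eq_square)
    also have "\<alpha> * ((\<beta>^2 * n^2) / (1 - \<beta>)) = \<alpha> * \<beta>^2 / (1 - \<beta>) * n^2" by simp
    finally show ?thesis .
  qed
  have "measure_pmf.expectation (Z R P \<beta> Qs eps Q0 (Suc k)) (\<lambda>z. (snd (snd z))^2) =
    measure_pmf.expectation (Z R P \<beta> Qs eps Q0 k) (\<lambda>z. (\<rho> * snd (snd z) + \<alpha> * \<beta> * supnorm (fst (snd z)))^2)"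
    by (subst E_Z_Suc) (simp add: zstep_def case_prod_unfold \<alpha>_def \<rho>_def)
  also have "\<dots> \<le> measure_pmf.expectation (Z R P \<beta> Qs eps Q0 k)
      (\<lambda>z. \<rho> * (snd (snd z))^2 + \<alpha> * \<beta>^2 / (1 - \<beta>) * (supnorm (fst (snd z)))^2)"
    by (rule E_mono[OF finite_Z]) (rule pw)
  also have "\<dots> = \<rho> * measure_pmf.expectation (Z R P \<beta> Qs eps Q0 k) (\<lambda>z. (snd (snd z))^2)
     + \<alpha> * \<beta>^2 / (1 - \<beta>) * measure_pmf.expectation (Z R P \<beta> Qs eps Q0 k) (\<lambda>z. (supnorm (fst (snd z)))^2)"
    by (simp add: integrable_measure_pmf_finite finite_Z)
  also have "\<dots> \<le> \<rho> * G k + \<alpha> * \<beta>^2 / (1 - \<beta>) * H k"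
    using Suc.IH Hb[of k] rho a beta by (intro add_mono mult_left_mono) auto
  also have "\<dots> \<le> G (Suc k)" using Gs[of k] by (simp add: \<rho>_def \<alpha>_def)
  finally show ?case .
qed

lemma general_bound:
  assumes eps: "\<And>k. 0 < eps k \<and> eps k \<le> 1"
    and Hb: "\<And>k. measure_pmf.expectation (Z R P \<beta> Qs eps Q0 k) (\<lambda>z. (supnorm (fst (snd z)))^2) \<le> H k"
    and G0: "G 0 \<ge> 0"
    and Gs: "\<And>k. (1 - eps k * (1 - \<beta>)) * G k + eps k * \<beta>^2 / (1 - \<beta>) * H k \<le> G (Suc k)"
  shows "measure_pmf.expectation (qlearn R P \<beta> eps Q0 k) (\<lambda>Q. (supnorm (\<lambda>x. Q x - Qs x))^2)
     \<le> 3/2 * ((\<Prod>j<k. 1 - eps j * (1 - \<beta>)) * supnorm (\<lambda>x. Q0 x - Qs x))^2 + 6 * G k + 6 * H k"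
proof -
  define A where "A = (\<Prod>j<k. 1 - eps j * (1 - \<beta>)) * supnorm (\<lambda>x. Q0 x - Qs x)"
  have A0: "A \<ge> 0" unfolding A_def using eps beta
    by (intro mult_nonneg_nonneg prod_nonneg supnorm_nonneg) (auto simp: mult_le_one)
  have eps': "\<And>k. 0 \<le> eps k \<and> eps k \<le> 1" using eps by (auto intro: less_imp_le)
  have "measure_pmf.expectation (qlearn R P \<beta> eps Q0 k) (\<lambda>Q. (supnorm (\<lambda>x. Q x - Qs x))^2) =
    measure_pmf.expectation (Z R P \<beta> Qs eps Q0 k) (\<lambda>z. (supnorm (\<lambda>x. fst z x - Qs x))^2)"
    by (rule E_qlearn)
  also have "\<dots> \<le> measure_pmf.expectation (Z R P \<beta> Qs eps Q0 k)
     (\<lambda>z. 3/2 * A^2 + 6 * (snd (snd z))^2 + 6 * (supnorm (fst (snd z)))^2)"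
  proof (rule E_mono[OF finite_Z])
    fix z assume z: "z \<in> set_pmf (Z R P \<beta> Qs eps Q0 k)"
    define C where "C = snd (snd z)"
    define n where "n = supnorm (fst (snd z))"
    have inv: "supnorm (\<lambda>x. fst z x - Qs x - fst (snd z) x) \<le> A + C" "0 \<le> C"
      using Z_inv[OF beta fixpoint eps' z] by (auto simp: A_def C_def)
    have "supnorm (\<lambda>x. fst z x - Qs x) \<le> A + (C + n)"
      using sn_diff_le[of "fst z" Qs "fst (snd z)"] inv by (simp add: n_def)
    moreover have "0 \<le> supnorm (\<lambda>x. fst z x - Qs x)" by (rule supnorm_nonneg)
    ultimately have "(supnorm (\<lambda>x. fst z x - Qs x))^2 \<le> (A + (C + n))^2"
      by (intro power_mono) auto
    also have "\<dots> \<le> 3/2 * A^2 + 6 * C^2 + 6 * n^2"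
    proof -
      have "(A + (C + n))^2 \<le> 3/2 * A^2 + 3 * (C + n)^2"
      proof -
        have h: "0 \<le> (A - 2*(C + n))^2" by simp
        show ?thesis using h unfolding power2_eq_square by (simp add: algebra_simps)
      qed
      also have "(C + n)^2 \<le> 2 * C^2 + 2 * n^2"
      proof -
        have h: "0 \<le> (C - n)^2" by simp
        show ?thesis using h unfolding power2_eq_square by (simp add: algebra_simps)
      qed
      finally show ?thesis by simp
    qed
    finally show "(supnorm (\<lambda>x. fst z x - Qs x))^2 \<le> 3/2 * A^2 + 6 * (snd (snd z))^2 + 6 * (supnorm (fst (snd z)))^2"
      by (simp add: C_def n_def)
  qed
  also have "\<dots> = 3/2 * A^2 + 6 * measure_pmf.expectation (Z R P \<beta> Qs eps Q0 k) (\<lambda>z. (snd (snd z))^2)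
      + 6 * measure_pmf.expectation (Z R P \<beta> Qs eps Q0 k) (\<lambda>z. (supnorm (fst (snd z)))^2)"
    by (simp add: integrable_measure_pmf_finite finite_Z)
  also have "\<dots> \<le> 3/2 * A^2 + 6 * G k + 6 * H k"
    using Z_C2[OF eps Hb G0 Gs, of k] Hb[of k] by linarith
  finally show ?thesis by (simp add: A_def)
qed

end


lemma H1:
  fixes n e B x :: real
  assumes "n \<ge> e" "e \<ge> 2" "B \<ge> 0" "x^2 \<le> B"
  shows "(1 - e/n)^2 * (2*e*B/n) + (e/n)^2 * x^2 \<le> 2*e*B/(n+1)"
proof -
  have n: "n > 0" using assms by linarith
  have a: "0 \<le> 1 - e/n" "1 - e/n \<le> 1" using assms n by (auto simp: field_simps)
  have "(1 - e/n)^2 \<le> 1 - e/n" using a by (simp add: power2_eq_square mult_left_le_one_le)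
  hence "(1 - e/n)^2 * (2*e*B/n) \<le> (1 - e/n) * (2*e*B/n)"
    using assms n by (intro mult_right_mono) auto
  moreover have "(e/n)^2 * x^2 \<le> (e/n)^2 * B" using assms by (intro mult_left_mono) auto
  moreover have "(1 - e/n) * (2*e*B/n) + (e/n)^2 * B \<le> 2*e*B/(n+1)"
  proof -
    have "(1 - e/n) * (2*e*B/n) + (e/n)^2 * B = e * B * (2*(n - e) + e) / n^2"
      using n by (simp add: field_simps power2_eq_square)
    also have "\<dots> \<le> 2*e*B/(n+1)"
    proof -
      have "2*n \<le> e*n" using mult_right_mono[of 2 e n] assms n by simp
      moreover have "(2*(n - e) + e) * (n+1) = 2 * n^2 + 2*n - e*n - e"
        by (simp add: power2_eq_square algebra_simps)
      ultimately have "(2*(n - e) + e) * (n+1) \<le> 2 * n^2"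
        using assms n by linarith
      hence "e * B * (2*(n - e) + e) * (n+1) \<le> (2*e*B) * n^2"
        using assms mult_left_mono[of "(2*(n - e) + e) * (n+1)" "2 * n^2" "e*B"] by (simp add: mult.assoc)
      thus ?thesis using n by (simp add: field_simps)
    qed
    finally show ?thesis .
  qed
  ultimately show ?thesis by linarith
qed

lemma H2:
  fixes n g c :: real
  assumes "n \<ge> 4" "g \<ge> 0" "0 \<le> c" "c \<le> 3 * g"
  shows "(1 - 4/n) * (g/n) + c/n^2 \<le> g/(n+1)"
proof -
  have n: "n > 0" using assms by linarith
  have "(1 - 4/n) * (g/n) + c/n^2 = ((n - 4) * g + c) / n^2"
    using n by (simp add: field_simps power2_eq_square)
  also have "\<dots> \<le> g/(n+1)"
  proof -
    have "((n - 4) * g + c) * (n+1) \<le> g * n^2"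
    proof -
      have "c * (n+1) \<le> 3 * g * (n+1)" using assms n by (intro mult_right_mono) auto
      thus ?thesis using assms by (simp add: power2_eq_square algebra_simps)
    qed
    thus ?thesis using n by (simp add: field_simps)
  qed
  finally show ?thesis .
qed

lemma H3:
  fixes K :: real
  assumes "K \<ge> 4"
  shows "(\<Prod>j<k. 1 - 4/(real j + K)) \<le> K / (real k + K)"
proof (induction k)
  case 0 then show ?case using assms by simp
next
  case (Suc k)
  define n where "n = real k + K"
  have n: "n \<ge> 4" using assms by (simp add: n_def)
  have r: "0 \<le> 1 - 4/n" using n by (simp add: field_simps)
  have "(\<Prod>j<Suc k. 1 - 4/(real j + K)) = (\<Prod>j<k. 1 - 4/(real j + K)) * (1 - 4/n)"
    by (simp add: n_def)
  also have "\<dots> \<le> K / n * (1 - 4/n)" using Suc.IH r by (intro mult_right_mono) (auto simp: n_def)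
  also have "\<dots> \<le> K / (n + 1)"
  proof -
    have "(1 - 4/n) / n \<le> 1 / (n+1)"
      using H2[OF n, of 1 0] by (simp add: field_simps)
    hence "K * ((1 - 4/n) / n) \<le> K * (1 / (n+1))" using assms by (intro mult_left_mono) auto
    thus ?thesis by simp
  qed
  finally show ?case by (simp add: n_def add_ac)
qed



theorem theorem5:
  fixes R :: "'s::finite \<Rightarrow> 'a::finite \<Rightarrow> real"
    and P :: "'a \<Rightarrow> 's \<Rightarrow> 's pmf"
    and \<beta> :: real
    and Q0 Qs :: "'s \<times> 'a \<Rightarrow> real"
  assumes R_bounds: "\<And>s a. 0 \<le> R s a \<and> R s a \<le> 1"
    and beta: "0 < \<beta>" "\<beta> < 1"
    and card: "CARD('s) * CARD('a) \<ge> 2"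
    and fixpoint: "bellman R P \<beta> Qs = Qs"
  shows
    "(\<forall>\<epsilon>::real. 0 < \<epsilon> \<longrightarrow>
        \<epsilon> \<le> (1 - \<beta>)^2 / (640 * exp 1 * ln (real (CARD('s) * CARD('a)))) \<longrightarrow>
        (\<forall>k. measure_pmf.expectation (qlearn R P \<beta> (\<lambda>_. \<epsilon>) Q0 k)
                (\<lambda>Q. (supnorm (\<lambda>x. Q x - Qs x))^2)
             \<le> 3/2 * (supnorm (\<lambda>x. Q0 x - Qs x))^2 * (1 - (1 - \<beta>) * \<epsilon> / 2)^k
               + (1 + 2 * (supnorm Qs)^2) * (256 * exp 1 * ln (real (CARD('s) * CARD('a))) * \<epsilon>)
                 / (1 - \<beta>)^2))
     \<and>
     (let \<epsilon> = 4 / (1 - \<beta>);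
          K = 640 * exp 1 * ln (real (CARD('s) * CARD('a))) / (1 - \<beta>)^3
      in \<forall>k. measure_pmf.expectation (qlearn R P \<beta> (\<lambda>j. \<epsilon> / (real j + K)) Q0 k)
                (\<lambda>Q. (supnorm (\<lambda>x. Q x - Qs x))^2)
             \<le> 8192 * (exp 1)^2 * (1 + 2 * (supnorm Qs)^2 + (supnorm (\<lambda>x. Q0 x - Qs x))^2)
               * (ln (real (CARD('s) * CARD('a))) / (1 - \<beta>)^3) * (1 / (real k + K)))"
proof -
  define d where "d = real (CARD('s) * CARD('a))"
  define L where "L = ln d"
  define l where "l = ln (2 * d) + 1"
  define x where "x = supnorm Qs"
  define B where "B = 1 + x^2"
  define e0 where "e0 = supnorm (\<lambda>x. Q0 x - Qs x)"
  define u where "u = 1 / (1 - \<beta>)"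
  have d2: "d \<ge> 2" using card unfolding d_def by (metis of_nat_le_iff of_nat_numeral)
  have L2: "L \<ge> ln 2" using d2 by (simp add: L_def)
  have L: "L \<ge> 1/2" using L2 ln_two_half by linarith
  have l4: "l \<le> 4 * L"
  proof -
    have "l = ln 2 + L + 1" using d2 by (simp add: l_def L_def ln_mult)
    thus ?thesis using L2 L by linarith
  qed
  have l0: "l \<ge> 0" using d2 by (simp add: l_def)
  have e2: "exp 1 \<ge> (2::real)" using exp_ge_add_one_self[of "1::real"] by simp
  have x0: "x \<ge> 0" by (simp add: x_def supnorm_nonneg)
  have B1: "B \<ge> 1" "x^2 \<le> B" by (auto simp: B_def)
  have e00: "e0 \<ge> 0" by (simp add: e0_def supnorm_nonneg)
  have bb: "0 < 1 - \<beta>" "1 - \<beta> \<le> 1" using beta by auto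
  have u1: "u \<ge> 1" using bb by (simp add: u_def)
  have u3: "u \<le> u^3" using u1 by (simp add: power3_eq_cube) (metis mult_le_cancel_left1 less_le_trans zero_less_one mult_le_cancel_right1 one_le_power power2_eq_square numeral_2_eq_2 u1 le_less_trans order.refl)
  have card2: "CARD('s) * CARD('a) \<ge> 2" by (rule card)
  show ?thesis
    unfolding Let_def d_def[symmetric] L_def[symmetric] x_def[symmetric] e0_def[symmetric]
  proof (intro conjI allI impI)
    fix \<epsilon> :: real and k :: nat
    assume ep: "0 < \<epsilon>" and epb: "\<epsilon> \<le> (1 - \<beta>)^2 / (640 * exp 1 * L)"
    have "(1 - \<beta>)^2 / (640 * exp 1 * L) \<le> 1"
    proof -
      have "(1 - \<beta>)^2 \<le> 1" using bb by (simp add: power_le_one)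
      also have "1 \<le> 640 * exp 1 * L"
      proof -
        have "2 * (1/2) \<le> exp 1 * L" by (rule mult_mono) (use e2 L in auto)
        thus ?thesis by linarith
      qed
      finally show ?thesis using L e2 by (simp add: pos_divide_le_eq)
    qed
    hence ep1: "\<epsilon> \<le> 1" using epb by linarith
    have eps: "\<And>k. 0 < (\<lambda>_. \<epsilon>) k \<and> (\<lambda>_. \<epsilon>) k \<le> 1" using ep ep1 by simp
    have eps': "\<And>k. 0 \<le> (\<lambda>_. \<epsilon>) k \<and> (\<lambda>_. \<epsilon>) k \<le> 1" using ep ep1 by simp
    have Vs: "\<And>k. (1 - (\<lambda>_. \<epsilon>) k)^2 * (\<lambda>_. \<epsilon> * B) k + ((\<lambda>_. \<epsilon>) k)^2 * (supnorm Qs)^2 \<le> (\<lambda>_. \<epsilon> * B) (Suc k)"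
    proof -
      have "(1 - \<epsilon>)^2 * (\<epsilon> * B) + \<epsilon>^2 * x^2 \<le> (1 - \<epsilon>)^2 * (\<epsilon> * B) + \<epsilon>^2 * B"
        using B1 by (intro add_left_mono mult_left_mono) auto
      also have "\<dots> = \<epsilon> * B * (1 - \<epsilon> + \<epsilon>^2) - \<epsilon> * B * \<epsilon> + \<epsilon> * B * \<epsilon>"
        by (simp add: power2_eq_square algebra_simps)
      also have "\<dots> \<le> \<epsilon> * B"
      proof -
        have "\<epsilon>^2 \<le> \<epsilon>" using ep ep1 by (simp add: power2_eq_square mult_left_le_one_le)
        hence "1 - \<epsilon> + \<epsilon>^2 \<le> 1" by simp
        hence "\<epsilon> * B * (1 - \<epsilon> + \<epsilon>^2) \<le> \<epsilon> * B * 1" using ep B1 by (intro mult_left_mono) auto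
        thus ?thesis by simp
      qed
      finally show "\<And>k. ?thesis k" by (simp add: x_def)
    qed
    have Hb: "\<And>k. measure_pmf.expectation (Z R P \<beta> Qs (\<lambda>_. \<epsilon>) Q0 k) (\<lambda>z. (supnorm (fst (snd z)))^2) \<le> (\<lambda>_. 2 * (\<epsilon> * B) * l) k"
      using Z_N2[OF beta fixpoint eps', of "\<lambda>_. \<epsilon> * B"] Vs card2 ep B1
      by (simp add: l_def d_def)
    define H where "H = 2 * (\<epsilon> * B) * l"
    define G where "G = \<beta>^2 * u^2 * H"
    have H0: "H \<ge> 0" using ep B1 l0 by (simp add: H_def)
    have Gs: "\<And>k. (1 - (\<lambda>_. \<epsilon>) k * (1 - \<beta>)) * (\<lambda>_. G) k + (\<lambda>_. \<epsilon>) k * \<beta>^2 / (1 - \<beta>) * (\<lambda>_. H) k \<le> (\<lambda>_. G) (Suc k)"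
    proof -
      have "(1 - \<epsilon> * (1 - \<beta>)) * G + \<epsilon> * \<beta>^2 / (1 - \<beta>) * H = G - \<epsilon> * (1 - \<beta>) * (\<beta>^2 * u^2 * H) + \<epsilon> * \<beta>^2 * u * H"
        by (simp add: G_def u_def algebra_simps)
      also have "(1 - \<beta>) * u^2 = u" using bb by (simp add: u_def power2_eq_square)
      hence "\<epsilon> * (1 - \<beta>) * (\<beta>^2 * u^2 * H) = \<epsilon> * \<beta>^2 * u * H"
        by (metis (no_types, lifting) mult.assoc mult.left_commute)
      finally show "\<And>k. ?thesis k" by simp
    qed
    have G0: "G \<ge> 0" using H0 by (simp add: G_def)
    have main: "measure_pmf.expectation (qlearn R P \<beta> (\<lambda>_. \<epsilon>) Q0 k) (\<lambda>Q. (supnorm (\<lambda>x. Q x - Qs x))^2)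
      \<le> 3/2 * ((\<Prod>j<k. 1 - (\<lambda>_. \<epsilon>) j * (1 - \<beta>)) * e0)^2 + 6 * (\<lambda>_. G) k + 6 * (\<lambda>_. H) k"
      using general_bound[OF beta fixpoint eps, where H="\<lambda>_. H" and G="\<lambda>_. G"] Hb Gs G0
      by (simp add: e0_def H_def)
    define \<rho> where "\<rho> = 1 - \<epsilon> * (1 - \<beta>)"
    have rho: "0 \<le> \<rho>" "\<rho> \<le> 1" using ep ep1 bb by (auto simp: \<rho>_def mult_le_one)
    have t1: "((\<Prod>j<k. 1 - (\<lambda>_. \<epsilon>) j * (1 - \<beta>)) * e0)^2 \<le> e0^2 * (1 - (1 - \<beta>) * \<epsilon> / 2)^k"
    proof -
      have "((\<Prod>j<k. 1 - (\<lambda>_. \<epsilon>) j * (1 - \<beta>)) * e0)^2 = (\<rho>^2)^k * e0^2"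
        by (simp add: \<rho>_def power_mult_distrib flip: power_mult) (simp add: mult.commute)
      also have "(\<rho>^2)^k \<le> (1 - (1 - \<beta>) * \<epsilon> / 2)^k"
      proof (rule power_mono)
        have "\<rho>^2 \<le> \<rho>" using rho by (simp add: power2_eq_square mult_left_le_one_le)
        also have "\<rho> \<le> 1 - (1 - \<beta>) * \<epsilon> / 2" using ep bb by (simp add: \<rho>_def)
        finally show "\<rho>^2 \<le> 1 - (1 - \<beta>) * \<epsilon> / 2" .
      qed simp
      hence "(\<rho>^2)^k * e0^2 \<le> (1 - (1 - \<beta>) * \<epsilon> / 2)^k * e0^2" by (intro mult_right_mono) auto
      finally show ?thesis by (simp add: mult.commute)
    qed
    have t2: "6 * G + 6 * H \<le> (1 + 2 * x^2) * (256 * exp 1 * L * \<epsilon>) / (1 - \<beta>)^2"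
    proof -
      have "\<beta>^2 \<le> 1" using beta by (simp add: power_le_one)
      hence "\<beta>^2 * u^2 \<le> u^2" using mult_right_mono[of "\<beta>^2" 1 "u^2"] by simp
      moreover have "1 \<le> u^2" using u1 by (simp add: one_le_power)
      ultimately have "\<beta>^2 * u^2 + 1 \<le> 2 * u^2" by linarith
      hence "(\<beta>^2 * u^2 + 1) * H \<le> (2 * u^2) * H" using H0 by (rule mult_right_mono)
      hence "6 * G + 6 * H \<le> 12 * u^2 * H" unfolding G_def by (simp add: algebra_simps)
      also have "\<dots> \<le> 12 * u^2 * (8 * \<epsilon> * B * L)"
      proof -
        have "2*(\<epsilon>*B)*l \<le> 2*(\<epsilon>*B)*(4*L)" by (rule mult_left_mono[OF l4]) (use ep B1 in simp)
        hence "H \<le> 8 * \<epsilon> * B * L" by (simp add: H_def)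
        moreover have "0 \<le> 12 * u^2" by simp
        ultimately show ?thesis by (rule mult_left_mono)
      qed
      also have "\<dots> \<le> u^2 * ((1 + 2 * x^2) * (256 * exp 1 * L * \<epsilon>))"
      proof -
        have "96 * B \<le> (1 + 2 * x^2) * 256 * exp 1"
        proof -
          have "(1 + 2 * x^2) * 256 * 2 \<le> (1 + 2 * x^2) * 256 * exp 1"
            using e2 by (intro mult_left_mono) auto
          hence "512 + 1024 * x^2 \<le> (1 + 2 * x^2) * 256 * exp 1" by (simp add: algebra_simps)
          moreover have "96 * (1 + x^2) = 96 + 96 * x^2" by simp
          ultimately show ?thesis unfolding B_def using zero_le_power2[of x] by linarith
        qed
        hence "(96 * B) * (\<epsilon> * L) \<le> ((1 + 2 * x^2) * 256 * exp 1) * (\<epsilon> * L)"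
          using ep L by (intro mult_right_mono) auto
        hence "12 * (8 * \<epsilon> * B * L) \<le> (1 + 2 * x^2) * (256 * exp 1 * L * \<epsilon>)"
          by (simp add: algebra_simps)
        hence "u^2 * (12 * (8 * \<epsilon> * B * L)) \<le> u^2 * ((1 + 2 * x^2) * (256 * exp 1 * L * \<epsilon>))"
          by (rule mult_left_mono) simp
        thus ?thesis by (simp only: mult.assoc mult.commute mult.left_commute)
      qed
      also have "\<dots> = (1 + 2 * x^2) * (256 * exp 1 * L * \<epsilon>) / (1 - \<beta>)^2"
        by (simp add: u_def power_divide)
      finally show ?thesis .
    qed
    show "measure_pmf.expectation (qlearn R P \<beta> (\<lambda>_. \<epsilon>) Q0 k) (\<lambda>Q. (supnorm (\<lambda>x. Q x - Qs x))^2)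
       \<le> 3/2 * e0^2 * (1 - (1 - \<beta>) * \<epsilon> / 2)^k + (1 + 2 * x^2) * (256 * exp 1 * L * \<epsilon>) / (1 - \<beta>)^2"
      using main t1 t2 by simp
  next
    fix k :: nat
    define \<epsilon> where "\<epsilon> = 4 / (1 - \<beta>)"
    define K where "K = 640 * exp 1 * L / (1 - \<beta>)^3"
    define eps where "eps = (\<lambda>j::nat. \<epsilon> / (real j + K))"
    have eL: "1 \<le> exp 1 * L"
    proof -
      have "2 * (1/2) \<le> exp 1 * L" by (rule mult_mono) (use e2 L in auto)
      thus ?thesis by linarith
    qed
    have Ku: "K = 640 * (exp 1 * L) * u^3" by (simp add: K_def u_def power_divide)
    have epu: "\<epsilon> = 4 * u" by (simp add: \<epsilon>_def u_def)
    have u31: "1 \<le> u^3" using u1 by (simp add: one_le_power)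
    have Kb: "K \<ge> 640 * u^3"
      using Ku mult_right_mono[OF eL, of "640 * u^3"] u31 u1 by (simp add: algebra_simps)
    have K4: "K \<ge> 4" using Kb u31 by linarith
    have Ke: "K \<ge> \<epsilon>" using Kb u3 epu u31 by linarith
    have e2': "\<epsilon> \<ge> 2" using epu u1 by linarith
    have n0: "\<And>j::nat. real j + K \<ge> K" by simp
    have epsb: "\<And>j. 0 < eps j \<and> eps j \<le> 1"
      using Ke K4 e2' n0 by (auto simp: eps_def divide_le_eq_1)
    have eps': "\<And>j. 0 \<le> eps j \<and> eps j \<le> 1" using epsb by (auto intro: less_imp_le)
    have epsr: "\<And>j. eps j * (1 - \<beta>) = 4 / (real j + K)"
    proof -
      fix j
      have e4: "\<epsilon> * (1 - \<beta>) = 4" using bb unfolding \<epsilon>_def by (simp add: divide_simps)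
      have "eps j * (1 - \<beta>) = (\<epsilon> * (1 - \<beta>)) / (real j + K)" by (simp add: eps_def)
      thus "eps j * (1 - \<beta>) = 4 / (real j + K)" using e4 by simp
    qed
    define V where "V = (\<lambda>j::nat. 2 * \<epsilon> * B / (real j + K))"
    have Vpos: "\<And>j. V j > 0" using e2' B1 K4 by (simp add: V_def)
    have Vs: "\<And>j. (1 - eps j)^2 * V j + (eps j)^2 * (supnorm Qs)^2 \<le> V (Suc j)"
    proof -
      fix j :: nat
      have "(1 - \<epsilon> / (real j + K))^2 * (2 * \<epsilon> * B / (real j + K)) + (\<epsilon> / (real j + K))^2 * x^2
         \<le> 2 * \<epsilon> * B / ((real j + K) + 1)"
        by (rule H1) (use Ke e2' B1 in auto)
      thus "?thesis j" by (simp add: eps_def V_def x_def add_ac)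
    qed
    define H where "H = (\<lambda>j. 2 * V j * l)"
    have Hb: "\<And>j. measure_pmf.expectation (Z R P \<beta> Qs eps Q0 j) (\<lambda>z. (supnorm (fst (snd z)))^2) \<le> H j"
    proof -
      fix j
      have "measure_pmf.expectation (Z R P \<beta> Qs eps Q0 j) (\<lambda>z. (supnorm (fst (snd z)))^2)
         \<le> 2 * V j * (ln (2 * real (CARD('s) * CARD('a))) + 1)"
        by (rule Z_N2[OF beta fixpoint eps']) (use Vpos Vs card2 less_imp_le in auto)
      thus "measure_pmf.expectation (Z R P \<beta> Qs eps Q0 j) (\<lambda>z. (supnorm (fst (snd z)))^2) \<le> H j"
        by (simp add: H_def l_def d_def)
    qed
    define g where "g = 64 * B * l * u^3"
    define G where "G = (\<lambda>j::nat. g / (real j + K))"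
    have g0: "g \<ge> 0" using B1 l0 u1 by (simp add: g_def)
    have Gs: "\<And>j. (1 - eps j * (1 - \<beta>)) * G j + eps j * \<beta>^2 / (1 - \<beta>) * H j \<le> G (Suc j)"
    proof -
      fix j :: nat
      define n where "n = real j + K"
      have n: "n \<ge> 4" "n > 0" using K4 by (auto simp: n_def)
      define c where "c = 64 * u^3 * \<beta>^2 * B * l"
      have c: "0 \<le> c" "c \<le> 3 * g"
      proof -
        show "0 \<le> c" using B1 l0 u1 by (simp add: c_def)
        have "\<beta>^2 \<le> 1" using beta by (simp add: power_le_one)
        hence "c \<le> 64 * u^3 * 1 * B * l" unfolding c_def using B1 l0 u1
          by (intro mult_right_mono mult_left_mono) auto
        moreover have "64 * u^3 * 1 * B * l = g" by (simp add: g_def algebra_simps)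
        ultimately show "c \<le> 3 * g" using g0 by linarith
      qed
      have eq: "eps j * \<beta>^2 / (1 - \<beta>) * H j = c / n^2"
      proof -
        have "\<beta>^2 / (1 - \<beta>) = \<beta>^2 * u" by (simp add: u_def)
        moreover have "eps j = 4 * u / n" by (simp add: eps_def epu n_def)
        moreover have "H j = 2 * (2 * (4 * u) * B / n) * l" by (simp add: H_def V_def epu n_def)
        moreover have "eps j * \<beta>^2 / (1 - \<beta>) * H j = eps j * (\<beta>^2 / (1 - \<beta>)) * H j" by simp
        ultimately have "eps j * \<beta>^2 / (1 - \<beta>) * H j = (4 * u / n) * (\<beta>^2 * u) * (2 * (2 * (4 * u) * B / n) * l)"
          by simp
        also have "\<dots> = c / n^2" using n by (simp add: c_def power2_eq_square power3_eq_cube field_simps)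
        finally show ?thesis .
      qed
      have "(1 - 4/n) * (g/n) + c/n^2 \<le> g/(n+1)" by (rule H2) (use n c g0 in auto)
      thus "?thesis j" using eq epsr[of j] by (simp add: G_def n_def add_ac)
    qed
    have G0: "G 0 \<ge> 0" using g0 K4 by (simp add: G_def)
    have main: "measure_pmf.expectation (qlearn R P \<beta> eps Q0 k) (\<lambda>Q. (supnorm (\<lambda>x. Q x - Qs x))^2)
      \<le> 3/2 * ((\<Prod>j<k. 1 - eps j * (1 - \<beta>)) * e0)^2 + 6 * G k + 6 * H k"
      using general_bound[OF beta fixpoint epsb Hb G0 Gs] by (simp add: e0_def)
    define n where "n = real k + K"
    have n: "n \<ge> K" "n > 0" using K4 by (auto simp: n_def)
    have pr: "(\<Prod>j<k. 1 - eps j * (1 - \<beta>)) = (\<Prod>j<k. 1 - 4 / (real j + K))"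
      using epsr by simp
    have pr1: "(\<Prod>j<k. 1 - 4 / (real j + K)) \<le> K / n" using H3[OF K4] by (simp add: n_def)
    have pr0: "0 \<le> (\<Prod>j<k. 1 - 4 / (real j + K))"
    proof (rule prod_nonneg)
      fix j assume "j \<in> {..<k}"
      have "4 \<le> real j + K" using K4 by simp
      thus "0 \<le> 1 - 4 / (real j + K)" by (simp add: field_simps)
    qed
    have Kn: "K / n \<le> 1" using n K4 by simp
    have t1: "((\<Prod>j<k. 1 - eps j * (1 - \<beta>)) * e0)^2 \<le> (K / n) * e0^2"
    proof -
      have "((\<Prod>j<k. 1 - eps j * (1 - \<beta>)) * e0)^2 = (\<Prod>j<k. 1 - 4 / (real j + K))^2 * e0^2"
        by (simp add: pr power_mult_distrib)
      also have "\<dots> \<le> (K/n)^2 * e0^2" using pr0 pr1 by (intro mult_right_mono power_mono) auto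
      also have "(K/n)^2 \<le> K/n" unfolding power2_eq_square
        by (rule mult_left_le_one_le) (use Kn K4 n in auto)
      hence "(K/n)^2 * e0^2 \<le> (K/n) * e0^2" by (intro mult_right_mono) auto
      finally show ?thesis .
    qed
    define Y where "Y = L * u^3"
    have Y0: "Y \<ge> 0" using L u1 by (simp add: Y_def)
    have num: "3/2 * (K * e0^2) + 6 * g + 6 * (2 * (2 * \<epsilon> * B) * l)
       \<le> 8192 * (exp 1)^2 * (1 + 2 * x^2 + e0^2) * Y"
    proof -
      have a1: "3/2 * (K * e0^2) = 960 * exp 1 * (Y * e0^2)" by (simp add: Ku Y_def)
      have a2: "6 * g \<le> 1536 * (B * Y)"
      proof -
        have "l * (B * u^3) \<le> (4 * L) * (B * u^3)" using l4 B1 u1 by (intro mult_right_mono) auto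
        thus ?thesis by (simp add: g_def Y_def algebra_simps)
      qed
      have a3: "6 * (2 * (2 * \<epsilon> * B) * l) \<le> 384 * (B * Y)"
      proof -
        have "l * (B * u) \<le> (4 * L) * (B * u)" using l4 B1 u1 by (intro mult_right_mono) auto
        moreover have "(L * B) * u \<le> (L * B) * u^3" using u3 L B1 by (intro mult_left_mono) auto
        ultimately show ?thesis by (simp add: epu Y_def algebra_simps)
      qed
      have ee: "exp 1 * 2 \<le> exp 1 * (exp 1 :: real)" using e2 by (intro mult_left_mono) auto
      have b1: "960 * exp 1 * (Y * e0^2) \<le> 8192 * (exp 1)^2 * (Y * e0^2)"
        using ee Y0 by (intro mult_right_mono) (auto simp: power2_eq_square)
      have b2: "1920 * (B * Y) \<le> 8192 * (exp 1)^2 * ((1 + 2 * x^2) * Y)"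
      proof -
        have "4 \<le> (exp 1 :: real)^2" using e2 power_mono[of 2 "exp 1 :: real" 2] by simp
        hence "(8192 * 4) * (1 + 2 * x^2) \<le> (8192 * (exp 1)^2) * (1 + 2 * x^2)"
          by (intro mult_right_mono) auto
        moreover have "(8192 * 4) * (1 + 2 * x^2) = 32768 + 65536 * x^2" by simp
        moreover have "1920 * B = 1920 + 1920 * x^2" by (simp add: B_def)
        ultimately have "1920 * B \<le> 8192 * (exp 1)^2 * (1 + 2 * x^2)" using zero_le_power2[of x]
          by linarith
        hence "(1920 * B) * Y \<le> (8192 * (exp 1)^2 * (1 + 2 * x^2)) * Y" using Y0 by (intro mult_right_mono)
        thus ?thesis by (simp add: algebra_simps)
      qed
      have "8192 * (exp 1)^2 * (1 + 2 * x^2 + e0^2) * Y = 8192 * (exp 1)^2 * ((1 + 2 * x^2) * Y) + 8192 * (exp 1)^2 * (Y * e0^2)"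
        by (simp add: algebra_simps)
      thus ?thesis using a1 a2 a3 b1 b2 by linarith
    qed
    have "measure_pmf.expectation (qlearn R P \<beta> eps Q0 k) (\<lambda>Q. (supnorm (\<lambda>x. Q x - Qs x))^2)
       \<le> (3/2 * (K * e0^2) + 6 * g + 6 * (2 * (2 * \<epsilon> * B) * l)) / n"
    proof -
      have "3/2 * ((\<Prod>j<k. 1 - eps j * (1 - \<beta>)) * e0)^2 \<le> 3/2 * ((K / n) * e0^2)" using t1 by simp
      moreover have "6 * G k + 6 * H k = (6 * g + 6 * (2 * (2 * \<epsilon> * B) * l)) / n"
        by (simp add: G_def H_def V_def n_def add_divide_distrib)
      ultimately show ?thesis using main n by (simp add: add_divide_distrib)
    qed
    also have "\<dots> \<le> 8192 * (exp 1)^2 * (1 + 2 * x^2 + e0^2) * Y / n"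
      using num n by (intro divide_right_mono) auto
    finally show "measure_pmf.expectation (qlearn R P \<beta> (\<lambda>j. 4 / (1 - \<beta>) / (real j + 640 * exp 1 * L / (1 - \<beta>)^3)) Q0 k)
        (\<lambda>Q. (supnorm (\<lambda>x. Q x - Qs x))^2)
      \<le> 8192 * (exp 1)^2 * (1 + 2 * x^2 + e0^2) * (L / (1 - \<beta>)^3) * (1 / (real k + 640 * exp 1 * L / (1 - \<beta>)^3))"
      by (simp add: eps_def \<epsilon>_def K_def n_def Y_def u_def power_divide)
  qed
qed

end
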